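(* Let $(x_n)$ be a nonincreasing sequence of positive reals that is interval-filling and whose cardinal function $f$ satisfies $\mathrm{rng}(f)=\{1,m\}$ for some integer $m\ge3$. Then $x_k\le\frac12 r_k$ for all $k\in\mathbb{N}$.
   Context: For a summable sequence $\mathbf{x}=(x_n)$ of positive reals, $\mathcal{A}(\mathbf{x})=\{\sum_{n\in A}x_n: A\subseteq\mathbb{N}\}$ is its achievement set and its cardinal function $f$ assigns to $x\in\mathcal{A}(\mathbf{x})$ the cardinality (a positive integer, $\omega$, or $\mathfrak{c}$) of $\{(\varepsilon_n)\in\{0,1\}^{\mathbb{N}}:\sum\varepsilon_nx_n=x\}$. The sequence is interval-filling if $\mathcal{A}(\mathbf{x})$ is an interval. The tail sums are $r_n=\sum_{k=n+1}^\infty x_k$. *)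

theory Defs
  imports "HOL-Analysis.Analysis"
begin

text \<open>Sequences are indexed by nat (first term at index 0).
  A subset A of indices encodes the 0-1 sequence (indicator of A).\<close>

definition achievement_set :: "(nat \<Rightarrow> real) \<Rightarrow> real set" where
  "achievement_set x = {s. \<exists>A. (x has_sum s) A}"

definition representations :: "(nat \<Rightarrow> real) \<Rightarrow> real \<Rightarrow> nat set set" where
  "representations x s = {A. (x has_sum s) A}"

definition cardinal_range_eq :: "(nat \<Rightarrow> real) \<Rightarrow> nat set \<Rightarrow> bool" where
  "cardinal_range_eq x S \<longleftrightarrow>
     (\<forall>s\<in>achievement_set x. finite (representations x s)) \<and>
     (\<lambda>s. card (representations x s)) ` achievement_set x = S"

definition interval_filling :: "(nat \<Rightarrow> real) \<Rightarrow> bool" where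
  "interval_filling x \<longleftrightarrow> is_interval (achievement_set x)"

definition tail_sum :: "(nat \<Rightarrow> real) \<Rightarrow> nat \<Rightarrow> real" where
  "tail_sum x k = (\<Sum>n. x (n + Suc k))"

end

theory Submission
  imports Defs
begin

lemma hs_split:
  fixes x :: "nat \<Rightarrow> real"
  assumes "(x has_sum a) A" "B \<subseteq> A"
  shows "\<exists>b. (x has_sum b) B \<and> (x has_sum (a - b)) (A - B)"
proof -
  have sA: "x summable_on A" using assms(1) has_sum_imp_summable by blast
  have "x summable_on B" using summable_on_subset_banach[OF sA assms(2)] .
  then obtain b where hb: "(x has_sum b) B" using summable_iff_has_sum_infsum by blast
  have "x summable_on (A - B)" using summable_on_subset_banach[OF sA] by blast
  then obtain c where hc: "(x has_sum c) (A - B)" using summable_iff_has_sum_infsum by blast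
  have "(x has_sum (b + c)) (B \<union> (A - B))" by (rule has_sum_Un_disjoint[OF hb hc]) auto
  moreover have "B \<union> (A - B) = A" using assms(2) by auto
  ultimately have "b + c = a" using assms(1) has_sum_unique by metis
  then show ?thesis using hb hc by (intro exI[of _ b]) auto
qed

lemma hs_mono:
  fixes x :: "nat \<Rightarrow> real"
  assumes nn: "\<And>n. x n \<ge> 0" and "(x has_sum a) A" "(x has_sum b) B" "A \<subseteq> B"
  shows "a \<le> b"
  by (rule has_sum_mono_neutral[OF assms(2,3)]) (use assms(4) nn in blast)+

lemma hs_elem:
  fixes x :: "nat \<Rightarrow> real"
  assumes nn: "\<And>n. x n \<ge> 0" and "(x has_sum a) A" "i \<in> A"
  shows "x i \<le> a"
proof -
  have "(x has_sum x i) {i}" by (rule has_sum_finiteI) auto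
  then show ?thesis using hs_mono[OF nn _ assms(2)] assms(3) by auto
qed

lemma hs_elem2:
  fixes x :: "nat \<Rightarrow> real"
  assumes nn: "\<And>n. x n \<ge> 0" and "(x has_sum a) A" "i \<in> A" "j \<in> A" "i \<noteq> j"
  shows "x i + x j \<le> a"
proof -
  have "(x has_sum (x i + x j)) {i, j}" by (rule has_sum_finiteI) (use assms(5) in auto)
  then show ?thesis using hs_mono[OF nn _ assms(2)] assms(3,4) by auto
qed

lemma count_lemma:
  fixes t :: "nat \<Rightarrow> nat"
  assumes "finite J" "\<forall>j\<in>J. t j \<in> {1, m}" "m \<ge> 1"
  shows "sum t J = card J \<or> sum t J \<ge> m + card J - 1"
proof (cases "\<forall>j\<in>J. t j = 1")
  case True
  then have "sum t J = sum (\<lambda>_. 1) J" by (intro sum.cong) auto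
  then show ?thesis by simp
next
  case False
  then obtain j0 where j0a: "j0 \<in> J" and "t j0 \<noteq> 1" by blast
  then have j0: "j0 \<in> J" "t j0 = m" using assms(2) by blast+
  have 1: "sum t J = t j0 + sum t (J - {j0})" using assms(1) j0(1) by (rule sum.remove)
  have 2: "sum t (J - {j0}) \<ge> sum (\<lambda>_. 1) (J - {j0})"
    by (rule sum_mono) (use assms(2,3) in fastforce)
  have 3: "card (J - {j0}) = card J - 1" using j0(1) assms(1) by simp
  have "sum t J \<ge> m + (card J - 1)" using 1 2 3 j0(2) by simp
  moreover have "card J \<ge> 1" using j0(1) assms(1) by (metis One_nat_def Suc_leI card_gt_0_iff empty_iff)
  ultimately show ?thesis by linarith
qed


lemma arith1:
  fixes c a s n m :: nat
  assumes "c = a + s" "a \<in> {1, m}" "s = n \<or> s \<ge> m + n - 1" "c \<in> {1, m}" "n \<ge> 1" "m \<ge> 3"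
  shows "n = m - 1"
  using assms by auto

lemma arith2:
  fixes c s n m :: nat
  assumes "c = s" "s = n \<or> s \<ge> m + n - 1" "c \<in> {1, m}" "n = m - 1" "m \<ge> 3"
  shows False
  using assms by auto

theorem lemma3p3:
  fixes x :: "nat \<Rightarrow> real" and m :: nat
  assumes pos: "\<And>n. x n > 0"
    and summ: "summable x"
    and noninc: "decseq x"
    and fill: "interval_filling x"
    and m3: "m \<ge> 3"
    and rng: "cardinal_range_eq x {1, m}"
  shows "\<forall>k. x k \<le> tail_sum x k / 2"
proof (rule allI, rule ccontr)
  fix k
  define r where "r = tail_sum x k"
  assume "\<not> x k \<le> tail_sum x k / 2"
  then have big: "r < 2 * x k" unfolding r_def by simp
  have nn: "\<And>n. x n \<ge> 0" using pos less_imp_le by blast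
  have dec: "\<And>i j. i \<le> j \<Longrightarrow> x j \<le> x i" using noninc decseqD by blast
  define S where "S = suminf x"
  have hS: "(x has_sum S) UNIV" unfolding S_def
    by (rule sums_nonneg_imp_has_sum) (use summ summable_sums nn in auto)
  define T where "T = {Suc k..}"
  have hT: "(x has_sum r) T"
  proof -
    have s1: "summable (\<lambda>n. x (n + Suc k))" using summ summable_ignore_initial_segment by blast
    have "((\<lambda>n. x (n + Suc k)) has_sum r) UNIV" unfolding r_def tail_sum_def
      by (rule sums_nonneg_imp_has_sum) (use s1 summable_sums nn in auto)
    then have "((x \<circ> (\<lambda>n. n + Suc k)) has_sum r) UNIV" by (simp add: o_def)
    moreover have "inj_on (\<lambda>n. n + Suc k) UNIV" by (auto simp: inj_on_def)
    moreover have "(\<lambda>n. n + Suc k) ` UNIV = T" unfolding T_def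
    proof (intro set_eqI iffI)
      fix n assume "n \<in> {Suc k..}"
      then have "n = (n - Suc k) + Suc k" by simp
      then show "n \<in> range (\<lambda>n. n + Suc k)" by blast
    qed auto
    ultimately show ?thesis using has_sum_reindex by metis
  qed
  have r0: "r \<ge> 0" using has_sum_nonneg[OF hT] nn by blast
  have xkS: "x k \<le> S" using hs_elem[OF nn hS] by simp
  have rS: "r \<le> S" using hs_mono[OF nn hT hS] by simp
  have ach: "z \<in> achievement_set x" if "0 \<le> z" "z \<le> S" for z
  proof -
    have "(x has_sum 0) {}" by simp
    then have "0 \<in> achievement_set x" unfolding achievement_set_def by blast
    moreover have "S \<in> achievement_set x" unfolding achievement_set_def using hS by auto
    moreover have "is_interval (achievement_set x)" using fill unfolding interval_filling_def .
    ultimately show ?thesis using mem_is_interval_1_I that by blast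
  qed
  have fin: "finite (representations x z)" for z
  proof (cases "z \<in> achievement_set x")
    case True then show ?thesis using rng unfolding cardinal_range_eq_def by blast
  next
    case False then have "representations x z = {}"
      unfolding achievement_set_def representations_def by auto
    then show ?thesis by simp
  qed
  have cardv: "card (representations x z) \<in> {1, m}" if "card (representations x z) \<noteq> 0" for z
  proof -
    have "representations x z \<noteq> {}" using that by auto
    then have "z \<in> achievement_set x" unfolding achievement_set_def representations_def by auto
    then show ?thesis using rng unfolding cardinal_range_eq_def by blast
  qed
  define RT where "RT z = {B. B \<subseteq> T \<and> (x has_sum z) B}" for z
  have RTsub: "RT z \<subseteq> representations x z" for z
    unfolding RT_def representations_def by auto
  have RTfin: "finite (RT z)" for z using finite_subset[OF RTsub fin] .
  have low: "representations x z = RT z" if "z < x k" for z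
  proof
    show "representations x z \<subseteq> RT z"
    proof
      fix A assume A: "A \<in> representations x z"
      then have hA: "(x has_sum z) A" unfolding representations_def by auto
      have "A \<subseteq> T"
      proof
        fix i assume i: "i \<in> A"
        show "i \<in> T"
        proof (rule ccontr)
          assume "i \<notin> T"
          then have "i \<le> k" unfolding T_def by auto
          then have "x k \<le> x i" using dec by blast
          moreover have "x i \<le> z" using hs_elem[OF nn hA i] .
          ultimately show False using that by simp
        qed
      qed
      then show "A \<in> RT z" unfolding RT_def using hA by auto
    qed
  qed (rule RTsub)
  have RTbig: "RT z = {}" if "z > r" for z
  proof -
    have "B \<notin> RT z" for B
    proof
      assume "B \<in> RT z"
      then have "B \<subseteq> T" "(x has_sum z) B" unfolding RT_def by auto
      then have "z \<le> r" using hs_mono[OF nn _ hT] by blast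
      then show False using that by simp
    qed
    then show ?thesis by blast
  qed
  have xkr: "x k \<le> r"
  proof (rule ccontr)
    assume "\<not> x k \<le> r"
    define y where "y = (r + x k) / 2"
    have y: "0 \<le> y" "y \<le> S" "y < x k" "r < y" using r0 xkS \<open>\<not> x k \<le> r\<close> unfolding y_def by auto
    then have "y \<in> achievement_set x" using ach by blast
    then have "representations x y \<noteq> {}" unfolding achievement_set_def representations_def by auto
    then have "RT y \<noteq> {}" using low[OF y(3)] by simp
    then show False using RTbig[OF y(4)] by simp
  qed
  have RTle: "card (RT z) \<le> card (RT (r - z))" for z
  proof (rule card_inj_on_le[OF _ _ RTfin])
    show "inj_on (\<lambda>B. T - B) (RT z)" unfolding RT_def inj_on_def by blast
    show "(\<lambda>B. T - B) ` RT z \<subseteq> RT (r - z)"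
    proof
      fix C assume "C \<in> (\<lambda>B. T - B) ` RT z"
      then obtain B where B: "B \<in> RT z" "C = T - B" by blast
      then have "B \<subseteq> T" "(x has_sum z) B" unfolding RT_def by auto
      then obtain b where "(x has_sum b) B" "(x has_sum (r - b)) (T - B)" using hs_split[OF hT] by blast
      then have "(x has_sum (r - z)) (T - B)" using \<open>(x has_sum z) B\<close> has_sum_unique by metis
      then show "C \<in> RT (r - z)" unfolding RT_def B(2) by auto
    qed
  qed
  have sym: "card (RT z) = card (RT (r - z))" for z
    using RTle[of z] RTle[of "r - z"] by simp
  have gval: "card (RT z) \<in> {1, m}" if "0 \<le> z" "z \<le> r" for z
  proof (cases "z < x k")
    case True
    have "z \<in> achievement_set x" using ach that True xkS by simp
    then have "representations x z \<noteq> {}" unfolding achievement_set_def representations_def by auto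
    then have "card (representations x z) \<noteq> 0" using fin by simp
    then show ?thesis using cardv[of z] low[OF True] by simp
  next
    case False
    then have z2: "r - z < x k" "0 \<le> r - z" using big that by auto
    have "r - z \<in> achievement_set x" using ach z2 xkS by simp
    then have "representations x (r - z) \<noteq> {}" unfolding achievement_set_def representations_def by auto
    then have "card (representations x (r - z)) \<noteq> 0" using fin by simp
    then show ?thesis using cardv[of "r - z"] low[OF z2(1)] sym[of z] by simp
  qed
  have decomp: "representations x y = RT y \<union> (\<Union>j\<in>{j. j \<le> k \<and> x j \<le> y}. insert j ` RT (y - x j))"
    if y: "y < 2 * x k" for y
  proof
    show "representations x y \<subseteq> RT y \<union> (\<Union>j\<in>{j. j \<le> k \<and> x j \<le> y}. insert j ` RT (y - x j))"
    proof
      fix A assume "A \<in> representations x y"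
      then have hA: "(x has_sum y) A" unfolding representations_def by auto
      show "A \<in> RT y \<union> (\<Union>j\<in>{j. j \<le> k \<and> x j \<le> y}. insert j ` RT (y - x j))"
      proof (cases "A \<subseteq> T")
        case True then show ?thesis unfolding RT_def using hA by auto
      next
        case False
        then obtain i where i: "i \<in> A" "i \<notin> T" by blast
        then have ik: "i \<le> k" unfolding T_def by auto
        have AT: "A - {i} \<subseteq> T"
        proof
          fix j assume j: "j \<in> A - {i}"
          show "j \<in> T"
          proof (rule ccontr)
            assume "j \<notin> T"
            then have "j \<le> k" unfolding T_def by auto
            then have "x k \<le> x j" using dec by blast
            moreover have "x k \<le> x i" using dec ik by blast
            moreover have "x i + x j \<le> y" using hs_elem2[OF nn hA i(1), of j] j by auto
            ultimately show False using y by simp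
          qed
        qed
        have "{i} \<subseteq> A" using i by auto
        then obtain b where "(x has_sum b) {i}" "(x has_sum (y - b)) (A - {i})"
          using hs_split[OF hA] by blast
        moreover have "(x has_sum (x i)) {i}" by (rule has_sum_finiteI) auto
        ultimately have "b = x i" using has_sum_unique by blast
        with \<open>(x has_sum (y - b)) (A - {i})\<close> have hAi: "(x has_sum (y - x i)) (A - {i})" by simp
        have "x i \<le> y" using hs_elem[OF nn hA i(1)] .
        then have iD: "i \<in> {j. j \<le> k \<and> x j \<le> y}" using ik by simp
        have R: "A - {i} \<in> RT (y - x i)" unfolding RT_def using AT hAi by blast
        have Aeq: "A = insert i (A - {i})" using i(1) by (rule insert_Diff[symmetric])
        have "A \<in> insert i ` RT (y - x i)" by (rule rev_image_eqI[where f="insert i", OF R Aeq])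
        then have "A \<in> (\<Union>j\<in>{j. j \<le> k \<and> x j \<le> y}. insert j ` RT (y - x j))"
          using iD by (rule UN_I[rotated])
        then show ?thesis by (rule UnI2)
      qed
    qed
    show "RT y \<union> (\<Union>j\<in>{j. j \<le> k \<and> x j \<le> y}. insert j ` RT (y - x j)) \<subseteq> representations x y"
    proof
      fix A assume A: "A \<in> RT y \<union> (\<Union>j\<in>{j. j \<le> k \<and> x j \<le> y}. insert j ` RT (y - x j))"
      show "A \<in> representations x y"
      proof (cases "A \<in> RT y")
        case True then show ?thesis using RTsub by blast
      next
        case False
        then obtain j B where jB: "j \<le> k" "B \<in> RT (y - x j)" "A = insert j B" using A by blast
        then have "B \<subseteq> T" "(x has_sum (y - x j)) B" unfolding RT_def by auto
        moreover have "j \<notin> B" using jB(1) \<open>B \<subseteq> T\<close> unfolding T_def by auto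
        ultimately have "(x has_sum (x j + (y - x j))) (insert j B)" by (intro has_sum_insert)
        then show ?thesis unfolding representations_def jB(3) by simp
      qed
    qed
  qed
  have cnt: "card (representations x y) = card (RT y) + (\<Sum>j\<in>{j. j \<le> k \<and> x j \<le> y}. card (RT (y - x j)))"
    if y: "y < 2 * x k" for y
  proof -
    let ?D = "{j. j \<le> k \<and> x j \<le> y}"
    have fD: "finite ?D" by simp
    have c1: "card (\<Union>j\<in>?D. insert j ` RT (y - x j)) = (\<Sum>j\<in>?D. card (insert j ` RT (y - x j)))"
    proof (rule card_UN_disjoint[OF fD])
      show "\<forall>i\<in>?D. finite (insert i ` RT (y - x i))" using RTfin by blast
      show "\<forall>i\<in>?D. \<forall>j\<in>?D. i \<noteq> j \<longrightarrow> insert i ` RT (y - x i) \<inter> insert j ` RT (y - x j) = {}"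
      proof (intro ballI impI)
        fix i j assume i: "i \<in> ?D" and j: "j \<in> ?D" and ij: "i \<noteq> j"
        show "insert i ` RT (y - x i) \<inter> insert j ` RT (y - x j) = {}"
        proof (rule ccontr)
          assume "insert i ` RT (y - x i) \<inter> insert j ` RT (y - x j) \<noteq> {}"
          then obtain B C where B: "B \<in> RT (y - x i)" and C: "C \<in> RT (y - x j)" and BC: "insert i B = insert j C"
            by blast
          have "C \<subseteq> T" using C unfolding RT_def by simp
          have "i \<in> insert j C" using BC by blast
          then have "i \<in> C" using ij by simp
          then have "i \<in> T" using \<open>C \<subseteq> T\<close> by blast
          then show False using i unfolding T_def by simp
        qed
      qed
    qed
    have c2: "card (insert j ` RT (y - x j)) = card (RT (y - x j))" if "j \<le> k" for j
    proof (rule card_image)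
      show "inj_on (insert j) (RT (y - x j))"
      proof (rule inj_onI)
        fix B C assume "B \<in> RT (y - x j)" "C \<in> RT (y - x j)" "insert j B = insert j C"
        moreover have "B \<subseteq> T" "C \<subseteq> T" using calculation(1,2) unfolding RT_def by simp_all
        then have "j \<notin> B" "j \<notin> C" using that unfolding T_def by auto
        ultimately show "B = C" by (metis Diff_insert_absorb)
      qed
    qed
    have disj: "RT y \<inter> (\<Union>j\<in>?D. insert j ` RT (y - x j)) = {}"
    proof (rule ccontr)
      assume "RT y \<inter> (\<Union>j\<in>?D. insert j ` RT (y - x j)) \<noteq> {}"
      then obtain A j where A: "A \<in> RT y" and j: "j \<in> ?D" and Aj: "A \<in> insert j ` RT (y - x j)" by blast
      have "j \<in> A" using Aj by blast
      moreover have "A \<subseteq> T" using A unfolding RT_def by simp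
      ultimately show False using j unfolding T_def by auto
    qed
    have "card (representations x y) = card (RT y) + card (\<Union>j\<in>?D. insert j ` RT (y - x j))"
      unfolding decomp[OF y] by (rule card_Un_disjoint[OF RTfin _ disj]) (use fD RTfin in auto)
    also have "\<dots> = card (RT y) + (\<Sum>j\<in>?D. card (RT (y - x j)))"
      using c1 c2 by simp
    finally show ?thesis .
  qed
  define J where "J = {j. j \<le> k \<and> x j \<le> r}"
  have fJ: "finite J" unfolding J_def by simp
  have kJ: "k \<in> J" unfolding J_def using xkr by simp
  have cJ: "card J \<ge> 1" using fJ kJ by (metis One_nat_def Suc_leI card_gt_0_iff empty_iff)
  have m1: "m \<ge> 1" using m3 by simp
  define w' where "w' = Max (x ` J)"
  have w'ge: "x j \<le> w'" if "j \<in> J" for j unfolding w'_def using fJ that by simp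
  have w'r: "w' \<le> r" unfolding w'_def using fJ kJ by (subst Max_le_iff) (auto simp: J_def)
  have w'k: "x k \<le> w'" using w'ge kJ .
  have DJ1: "{j. j \<le> k \<and> x j \<le> w'} = J"
  proof (intro set_eqI iffI)
    fix j assume "j \<in> {j. j \<le> k \<and> x j \<le> w'}"
    then show "j \<in> J" using w'r unfolding J_def by simp
  next
    fix j assume j: "j \<in> J"
    then have "x j \<le> w'" by (rule w'ge)
    then show "j \<in> {j. j \<le> k \<and> x j \<le> w'}" using j unfolding J_def by simp
  qed
  have n1: "card (representations x w') = card (RT w') + (\<Sum>j\<in>J. card (RT (w' - x j)))"
    using cnt[of w'] w'r big DJ1 by simp
  have a1: "card (RT w') \<in> {1, m}" using gval[of w'] w'r w'k pos[of k] by simp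
  have t1: "\<forall>j\<in>J. card (RT (w' - x j)) \<in> {1, m}"
  proof
    fix j assume j: "j \<in> J"
    then have "x j \<le> w'" using w'ge by blast
    moreover have "0 \<le> x j" using nn by blast
    ultimately show "card (RT (w' - x j)) \<in> {1, m}" using gval w'r by simp
  qed
  have s1: "(\<Sum>j\<in>J. card (RT (w' - x j))) = card J \<or> (\<Sum>j\<in>J. card (RT (w' - x j))) \<ge> m + card J - 1"
    using count_lemma[OF fJ t1 m1] .
  have v1: "card (representations x w') \<in> {1, m}"
  proof -
    have "card (representations x w') \<noteq> 0" using n1 a1 m1 by auto
    then show ?thesis by (rule cardv)
  qed
  have cardJ: "card J = m - 1"
    by (rule arith1[OF n1 a1 s1 v1 cJ m3])
  define W where "W = insert (2 * x k) (x ` {j. j \<le> k \<and> r < x j})"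
  have fW: "finite W" unfolding W_def by simp
  define w where "w = Min W"
  have wW: "w \<le> v" if "v \<in> W" for v unfolding w_def using fW that by simp
  have wr: "r < w" unfolding w_def
  proof (subst Min_gr_iff[OF fW])
    show "W \<noteq> {}" unfolding W_def by simp
    show "\<forall>a\<in>W. r < a" using big unfolding W_def by auto
  qed
  have w2: "w \<le> 2 * x k" by (rule wW) (simp add: W_def)
  define y0 where "y0 = (r + w) / 2"
  have y0: "r < y0" "y0 < w" unfolding y0_def using wr by auto
  have DJ2: "{j. j \<le> k \<and> x j \<le> y0} = J"
  proof (intro set_eqI iffI)
    fix j assume "j \<in> {j. j \<le> k \<and> x j \<le> y0}"
    then have j: "j \<le> k" "x j \<le> y0" by auto
    have "x j \<le> r"
    proof (rule ccontr)
      assume "\<not> x j \<le> r"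
      then have "x j \<in> W" unfolding W_def using j by auto
      then have "w \<le> x j" by (rule wW)
      then show False using y0(2) j(2) by linarith
    qed
    then show "j \<in> J" unfolding J_def using j by simp
  qed (use y0 in \<open>auto simp: J_def\<close>)
  have n2: "card (representations x y0) = (\<Sum>j\<in>J. card (RT (y0 - x j)))"
    using cnt[of y0] y0 w2 DJ2 RTbig[OF y0(1)] by simp
  have t2: "\<forall>j\<in>J. card (RT (y0 - x j)) \<in> {1, m}"
  proof
    fix j assume j: "j \<in> J"
    then have "x j \<le> r" "x k \<le> x j" using dec unfolding J_def by auto
    then show "card (RT (y0 - x j)) \<in> {1, m}" using gval y0 w2 xkr by simp
  qed
  have s2: "(\<Sum>j\<in>J. card (RT (y0 - x j))) = card J \<or> (\<Sum>j\<in>J. card (RT (y0 - x j))) \<ge> m + card J - 1"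
    using count_lemma[OF fJ t2 m1] .
  have v2: "card (representations x y0) \<in> {1, m}"
  proof -
    have "card (representations x y0) \<noteq> 0" using n2 s2 cJ m1 by auto
    then show ?thesis by (rule cardv)
  qed
  show False by (rule arith2[OF n2 s2 v2 cardJ m3])
qed

end
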